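(* Let $D$ be a squarefree integer and $p>5$ a prime not dividing $D$. Then $C_D(\mathbb{Q}_p)\neq\emptyset$.
   Context: $C_D\subset\mathbb{P}^4$ is the curve over $\mathbb{Q}$ given by $X_0^2-2X_1^2+X_2^2=0$, $X_1^2-2X_2^2+DX_3^2=0$, $X_2^2-2DX_3^2+X_4^2=0$. *)

theory Defs
  imports "HOL-Computational_Algebra.Computational_Algebra" "HOL-Number_Theory.Number_Theory"
begin

text \<open>p-adic integers Z_p as the inverse limit of Z/p^k Z: a p-adic integer is
  represented by a sequence x with x k an integer representative of its residue
  mod p^k, and the sequence compatible: x (k+1) = x k (mod p^k).\<close>
definition padic_int :: "nat \<Rightarrow> (nat \<Rightarrow> int) \<Rightarrow> bool" where
  "padic_int p x \<longleftrightarrow> (\<forall>k. [x (Suc k) = x k] (mod (int p) ^ k))"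

definition padic_zero :: "nat \<Rightarrow> (nat \<Rightarrow> int) \<Rightarrow> bool" where
  "padic_zero p x \<longleftrightarrow> (\<forall>k. [x k = 0] (mod (int p) ^ k))"

definition CD_eq1 :: "int \<Rightarrow> int \<Rightarrow> int \<Rightarrow> int \<Rightarrow> int \<Rightarrow> int \<Rightarrow> int" where
  "CD_eq1 D x0 x1 x2 x3 x4 = x0^2 - 2*x1^2 + x2^2"
definition CD_eq2 :: "int \<Rightarrow> int \<Rightarrow> int \<Rightarrow> int \<Rightarrow> int \<Rightarrow> int \<Rightarrow> int" where
  "CD_eq2 D x0 x1 x2 x3 x4 = x1^2 - 2*x2^2 + D*x3^2"
definition CD_eq3 :: "int \<Rightarrow> int \<Rightarrow> int \<Rightarrow> int \<Rightarrow> int \<Rightarrow> int \<Rightarrow> int" where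
  "CD_eq3 D x0 x1 x2 x3 x4 = x2^2 - 2*D*x3^2 + x4^2"

text \<open>Clearing
  denominators, such a point is given by a nonzero vector (x0,...,x4) in Z_p^5
  satisfying the three equations in Z_p (equations checked residue-wise,
  ring operations of Z_p being componentwise on residues).\<close>
definition CD_has_Qp_point :: "int \<Rightarrow> nat \<Rightarrow> bool" where
  "CD_has_Qp_point D p \<longleftrightarrow>
     (\<exists>x :: nat \<Rightarrow> nat \<Rightarrow> int.
        (\<forall>i<5. padic_int p (x i)) \<and>
        (\<exists>i<5. \<not> padic_zero p (x i)) \<and>
        padic_zero p (\<lambda>k. CD_eq1 D (x 0 k) (x 1 k) (x 2 k) (x 3 k) (x 4 k)) \<and>
        padic_zero p (\<lambda>k. CD_eq2 D (x 0 k) (x 1 k) (x 2 k) (x 3 k) (x 4 k)) \<and>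
        padic_zero p (\<lambda>k. CD_eq3 D (x 0 k) (x 1 k) (x 2 k) (x 3 k) (x 4 k)))"

end

theory Submission
  imports Defs
begin


context
  fixes p :: nat
  assumes p_prime: "prime p" and p_gt: "p > 2"
begin

lemma pint_prime: "prime (int p)" using p_prime by simp

lemma leg_cases: "Legendre a (int p) = 0 \<or> Legendre a (int p) = 1 \<or> Legendre a (int p) = -1"
  by (auto simp: Legendre_def)

lemma leg_zero_iff: "Legendre a (int p) = 0 \<longleftrightarrow> int p dvd a"
  by (auto simp: Legendre_def cong_0_iff)

lemma leg_cong:
  assumes "[a = b] (mod int p)"
  shows "Legendre a (int p) = Legendre b (int p)"
proof -
  have h1: "[a = 0] (mod int p) = [b = 0] (mod int p)" using assms by (meson cong_sym cong_trans)
  have h2: "QuadRes (int p) a = QuadRes (int p) b" unfolding QuadRes_def using assms by (meson cong_sym cong_trans)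
  show ?thesis unfolding Legendre_def h1 h2 ..
qed

lemma leg_mult: "Legendre (a*b) (int p) = Legendre a (int p) * Legendre b (int p)"
proof -
  have e1: "[Legendre (a*b) (int p) = (a*b) ^ ((p - 1) div 2)] (mod int p)"
    using euler_criterion[OF p_prime p_gt] .
  have e2: "[Legendre a (int p) * Legendre b (int p) = a ^ ((p - 1) div 2) * b ^ ((p - 1) div 2)] (mod int p)"
    using euler_criterion[OF p_prime p_gt] cong_mult by blast
  have "[Legendre (a*b) (int p) = Legendre a (int p) * Legendre b (int p)] (mod int p)"
    using e1 e2 by (metis cong_sym cong_trans power_mult_distrib)
  then have d: "int p dvd Legendre (a*b) (int p) - Legendre a (int p) * Legendre b (int p)"
    by (simp add: cong_iff_dvd_diff)
  have r: "\<bar>Legendre (a*b) (int p) - Legendre a (int p) * Legendre b (int p)\<bar> \<le> 2"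
    using leg_cases[of "a*b"] leg_cases[of a] leg_cases[of b] by auto
  show ?thesis
  proof (rule ccontr)
    assume "Legendre (a * b) (int p) \<noteq> Legendre a (int p) * Legendre b (int p)"
    then have "int p \<le> \<bar>Legendre (a*b) (int p) - Legendre a (int p) * Legendre b (int p)\<bar>"
      using d dvd_imp_le_int[of "Legendre (a*b) (int p) - Legendre a (int p) * Legendre b (int p)" "int p"] by simp
    with r p_gt show False by simp
  qed
qed

lemma leg_one: "Legendre 1 (int p) = 1"
proof -
  have "\<not> [1 = 0] (mod int p)" using p_gt by (simp add: cong_0_iff)
  moreover have "QuadRes (int p) 1" unfolding QuadRes_def by (rule exI[of _ 1]) simp
  ultimately show ?thesis by (simp add: Legendre_def)
qed

lemma leg_sq: "\<not> int p dvd a \<Longrightarrow> Legendre (a*a) (int p) = 1"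
  using leg_mult[of a a] leg_cases[of a] leg_zero_iff[of a] by auto

lemma leg_one_qr: "Legendre c (int p) = 1 \<Longrightarrow> \<exists>y. [y^2 = c] (mod int p)"
  by (auto simp: Legendre_def QuadRes_def split: if_splits)

lemma hensel_step:
  assumes k: "k \<ge> 1" and y: "[y^2 = c] (mod int p ^ k)" and c: "\<not> int p dvd c"
  shows "\<exists>y'. [y' = y] (mod int p ^ k) \<and> [y'^2 = c] (mod int p ^ Suc k)"
proof -
  obtain e where e: "y^2 - c = int p ^ k * e"
    using y by (metis cong_iff_dvd_diff cong_sym dvdE)
  have py: "\<not> int p dvd y"
  proof
    assume "int p dvd y"
    then have "int p dvd y^2" by (simp add: power2_eq_square)
    moreover have "int p dvd int p ^ k" using k by (simp add: dvd_power)
    then have "int p dvd y^2 - c" using e by simp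
    ultimately show False using c by (metis dvd_diff_commute dvd_add_right_iff diff_add_cancel dvd_diff)
  qed
  have cop: "coprime (2*y) (int p)"
  proof -
    have "\<not> int p dvd 2" using p_gt by (auto dest: zdvd_imp_le)
    then have "\<not> int p dvd 2*y" using py pint_prime by (simp add: prime_dvd_mult_iff)
    then have "coprime (int p) (2*y)" using prime_imp_coprime[OF pint_prime] by blast
    then show ?thesis by (simp add: coprime_commute)
  qed
  have "\<exists>t. [2*y*t = -e] (mod int p)" using cong_solve_dvd_int[of "2*y" "int p" "-e"] cop by (simp add: coprime_iff_gcd_eq_1)
  then obtain t where t: "[2*y*t = -e] (mod int p)" by blast
  have "int p dvd 2*y*t + e" using t by (simp add: cong_iff_dvd_diff)
  then obtain u where u: "2*y*t + e = int p * u" by (elim dvdE)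
  obtain j where j: "k = Suc j" using k by (cases k) auto
  define y' where "y' = y + int p ^ k * t"
  have "y'^2 - c = int p ^ k * (2*y*t + e) + (int p ^ k)^2 * t^2"
  proof -
    have "(y + int p ^ k * t)^2 - c = (y^2 - c) + int p ^ k * (2*y*t) + (int p ^ k)^2 * t^2"
      by (simp add: power2_eq_square algebra_simps)
    then show ?thesis unfolding y'_def using e by (simp add: algebra_simps)
  qed
  also have "(int p ^ k)^2 = int p ^ Suc k * int p ^ j"
    using j by (simp add: power2_eq_square flip: power_add)
  also have "int p ^ k * (2*y*t + e) = int p ^ Suc k * u"
    using u by simp
  finally have "y'^2 - c = int p ^ Suc k * (u + int p ^ j * t^2)"
    by (simp add: algebra_simps)
  then have "[y'^2 = c] (mod int p ^ Suc k)" by (simp add: cong_iff_dvd_diff)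
  moreover have "[y' = y] (mod int p ^ k)" unfolding y'_def by (simp add: cong_iff_dvd_diff)
  ultimately show ?thesis by blast
qed

lemma sqrt_seq:
  assumes "c = 0 \<or> Legendre c (int p) = 1"
  shows "\<exists>s. padic_int p s \<and> (\<forall>k. [s k ^ 2 = c] (mod int p ^ k)) \<and> (c \<noteq> 0 \<longrightarrow> \<not> int p dvd s 1)"
proof (cases "c = 0")
  case True
  then show ?thesis by (intro exI[of _ "\<lambda>k. 0"]) (simp add: padic_int_def)
next
  case False
  with assms have L: "Legendre c (int p) = 1" by simp
  then have nd: "\<not> int p dvd c" using leg_zero_iff[of c] by auto
  obtain y0 where y0: "[y0^2 = c] (mod int p)" using leg_one_qr[OF L] by blast
  define f where "f = (\<lambda>k sk. if k = 0 then y0 else (SOME y'. [y' = sk] (mod int p ^ k) \<and> [y'^2 = c] (mod int p ^ Suc k)))"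
  define s where "s = rec_nat y0 f"
  have s0: "s 0 = y0" and sS: "\<And>k. s (Suc k) = f k (s k)" by (simp_all add: s_def)
  have step: "k \<ge> 1 \<Longrightarrow> [s k ^ 2 = c] (mod int p ^ k) \<Longrightarrow>
      [s (Suc k) = s k] (mod int p ^ k) \<and> [s (Suc k) ^ 2 = c] (mod int p ^ Suc k)" for k
  proof -
    assume k: "k \<ge> 1" and h: "[s k ^ 2 = c] (mod int p ^ k)"
    have "s (Suc k) = (SOME y'. [y' = s k] (mod int p ^ k) \<and> [y'^2 = c] (mod int p ^ Suc k))"
      using k by (simp add: sS f_def)
    then show ?thesis using someI_ex[OF hensel_step[OF k h nd]] by simp
  qed
  have sq: "[s k ^ 2 = c] (mod int p ^ k)" for k
  proof (induction k)
    case 0 then show ?case by simp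
  next
    case (Suc k)
    show ?case
    proof (cases "k = 0")
      case True then show ?thesis using y0 by (simp add: sS f_def s0)
    next
      case False then show ?thesis using step[of k] Suc by simp
    qed
  qed
  have compat: "[s (Suc k) = s k] (mod int p ^ k)" for k
  proof (cases "k = 0")
    case True then show ?thesis by simp
  next
    case False then show ?thesis using step[of k] sq[of k] by simp
  qed
  have s1: "s 1 = y0" by (simp add: sS f_def s0)
  have "\<not> int p dvd y0"
  proof
    assume "int p dvd y0"
    then have "int p dvd y0^2" by (simp add: power2_eq_square)
    then show False using y0 nd by (metis cong_dvd_iff)
  qed
  then show ?thesis using compat sq s1 unfolding padic_int_def by blast
qed

lemma padic_scale: "padic_int p s \<Longrightarrow> padic_int p (\<lambda>k. D * s k)"
  unfolding padic_int_def by (simp add: cong_scalar_left)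

lemma all5: "(\<forall>i<(5::nat). Q i) \<longleftrightarrow> Q 0 \<and> Q 1 \<and> Q 2 \<and> Q 3 \<and> Q 4"
  by (auto simp: less_Suc_eq numeral_eq_Suc)

lemma ap_point:
  assumes nD: "\<not> int p dvd D"
  and h0: "a = 0 \<or> Legendre a (int p) = 1"
  and h1: "a + r = 0 \<or> Legendre (a+r) (int p) = 1"
  and h2: "a + 2*r = 0 \<or> Legendre (a+2*r) (int p) = 1"
  and h3: "a + 3*r = 0 \<or> Legendre (a+3*r) (int p) = Legendre D (int p)"
  and h4: "a + 4*r = 0 \<or> Legendre (a+4*r) (int p) = 1"
  and nz: "a \<noteq> 0 \<or> r \<noteq> 0"
  shows "CD_has_Qp_point D p"
proof -
  have LD: "Legendre D (int p) = 1 \<or> Legendre D (int p) = -1"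
    using leg_cases[of D] leg_zero_iff[of D] nD by auto
  have h3': "D*(a+3*r) = 0 \<or> Legendre (D*(a+3*r)) (int p) = 1"
    using h3 LD leg_mult[of D "a+3*r"] by auto
  obtain s0 where s0: "padic_int p s0" "\<forall>k. [s0 k ^ 2 = a] (mod int p ^ k)" "a \<noteq> 0 \<longrightarrow> \<not> int p dvd s0 1"
    using sqrt_seq[OF h0] by blast
  obtain s1 where s1: "padic_int p s1" "\<forall>k. [s1 k ^ 2 = a+r] (mod int p ^ k)" "a+r \<noteq> 0 \<longrightarrow> \<not> int p dvd s1 1"
    using sqrt_seq[OF h1] by blast
  obtain s2 where s2: "padic_int p s2" "\<forall>k. [s2 k ^ 2 = a+2*r] (mod int p ^ k)"
    using sqrt_seq[OF h2] by blast
  obtain s3 where s3: "padic_int p s3" "\<forall>k. [s3 k ^ 2 = D*(a+3*r)] (mod int p ^ k)"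
    using sqrt_seq[OF h3'] by blast
  obtain s4 where s4: "padic_int p s4" "\<forall>k. [s4 k ^ 2 = a+4*r] (mod int p ^ k)"
    using sqrt_seq[OF h4] by blast
  define x where "x = (\<lambda>i::nat. if i = 0 then (\<lambda>k. D * s0 k) else if i = 1 then (\<lambda>k. D * s1 k)
     else if i = 2 then (\<lambda>k. D * s2 k) else if i = 3 then s3 else (\<lambda>k. D * s4 k))"
  have pad: "\<forall>i<5. padic_int p (x i)"
    unfolding all5 x_def using padic_scale s0(1) s1(1) s2(1) s3(1) s4(1) by simp
  have nzx: "\<exists>i<5. \<not> padic_zero p (x i)"
  proof (cases "a = 0")
    case False
    then have "\<not> int p dvd D * s0 1" using s0(3) nD pint_prime by (simp add: prime_dvd_mult_iff)
    then have "\<not> padic_zero p (x 0)" unfolding padic_zero_def x_def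
      by (simp add: cong_0_iff) (rule exI[of _ "Suc 0"], simp)
    then show ?thesis by (intro exI[of _ 0]) simp
  next
    case True
    then have "a + r \<noteq> 0" using nz by simp
    then have "\<not> int p dvd D * s1 1" using s1(3) nD pint_prime by (simp add: prime_dvd_mult_iff)
    then have "\<not> padic_zero p (x 1)" unfolding padic_zero_def x_def
      by (simp add: cong_0_iff) (rule exI[of _ "Suc 0"], simp)
    then show ?thesis by (intro exI[of _ 1]) simp
  qed
  have e1: "padic_zero p (\<lambda>k. CD_eq1 D (x 0 k) (x 1 k) (x 2 k) (x 3 k) (x 4 k))"
    unfolding padic_zero_def
  proof
    fix k
    have "CD_eq1 D (x 0 k) (x 1 k) (x 2 k) (x 3 k) (x 4 k) = D^2*(s0 k^2) - 2*(D^2*(s1 k^2)) + D^2*(s2 k^2)"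
      by (simp add: x_def CD_eq1_def power_mult_distrib)
    also have "[\<dots> = D^2*a - 2*(D^2*(a+r)) + D^2*(a+2*r)] (mod int p ^ k)"
      using s0(2) s1(2) s2(2) by (intro cong_add cong_diff cong_mult cong_refl) auto
    also have "D^2*a - 2*(D^2*(a+r)) + D^2*(a+2*r) = 0" by (simp add: algebra_simps)
    finally show "[CD_eq1 D (x 0 k) (x 1 k) (x 2 k) (x 3 k) (x 4 k) = 0] (mod int p ^ k)" .
  qed
  have e2: "padic_zero p (\<lambda>k. CD_eq2 D (x 0 k) (x 1 k) (x 2 k) (x 3 k) (x 4 k))"
    unfolding padic_zero_def
  proof
    fix k
    have "CD_eq2 D (x 0 k) (x 1 k) (x 2 k) (x 3 k) (x 4 k) = D^2*(s1 k^2) - 2*(D^2*(s2 k^2)) + D*(s3 k^2)"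
      by (simp add: x_def CD_eq2_def power_mult_distrib)
    also have "[\<dots> = D^2*(a+r) - 2*(D^2*(a+2*r)) + D*(D*(a+3*r))] (mod int p ^ k)"
      using s1(2) s2(2) s3(2) by (intro cong_add cong_diff cong_mult cong_refl) auto
    also have "D^2*(a+r) - 2*(D^2*(a+2*r)) + D*(D*(a+3*r)) = 0" by (simp add: algebra_simps power2_eq_square)
    finally show "[CD_eq2 D (x 0 k) (x 1 k) (x 2 k) (x 3 k) (x 4 k) = 0] (mod int p ^ k)" .
  qed
  have e3: "padic_zero p (\<lambda>k. CD_eq3 D (x 0 k) (x 1 k) (x 2 k) (x 3 k) (x 4 k))"
    unfolding padic_zero_def
  proof
    fix k
    have "CD_eq3 D (x 0 k) (x 1 k) (x 2 k) (x 3 k) (x 4 k) = D^2*(s2 k^2) - 2*(D*(s3 k^2)) + D^2*(s4 k^2)"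
      by (simp add: x_def CD_eq3_def power_mult_distrib)
    also have "[\<dots> = D^2*(a+2*r) - 2*(D*(D*(a+3*r))) + D^2*(a+4*r)] (mod int p ^ k)"
      using s2(2) s3(2) s4(2) by (intro cong_add cong_diff cong_mult cong_refl) auto
    also have "D^2*(a+2*r) - 2*(D*(D*(a+3*r))) + D^2*(a+4*r) = 0" by (simp add: algebra_simps power2_eq_square)
    finally show "[CD_eq3 D (x 0 k) (x 1 k) (x 2 k) (x 3 k) (x 4 k) = 0] (mod int p ^ k)" .
  qed
  show ?thesis unfolding CD_has_Qp_point_def using pad nzx e1 e2 e3 by blast
qed

end



definition goodAP :: "nat \<Rightarrow> int \<Rightarrow> int \<Rightarrow> bool" where
"goodAP p a r \<longleftrightarrow> (a = 0 \<or> Legendre a (int p) = 1) \<and> (a + r = 0 \<or> Legendre (a + r) (int p) = 1) \<and>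
   (a + 2*r = 0 \<or> Legendre (a + 2*r) (int p) = 1) \<and> (a + 3*r = 0 \<or> Legendre (a + 3*r) (int p) = -1) \<and>
   (a + 4*r = 0 \<or> Legendre (a + 4*r) (int p) = 1) \<and> (a \<noteq> 0 \<or> r \<noteq> 0)"

definition psi3 :: "int \<Rightarrow> int" where "psi3 k = (if k mod 3 = 1 then 1 else -1)"
definition psi5 :: "int \<Rightarrow> int" where "psi5 k = (if k mod 5 = 1 \<or> k mod 5 = 4 then 1 else -1)"

context
  fixes p :: nat
  assumes p_prime: "prime p" and p_gt: "p > 5"
begin

abbreviation L where "L x \<equiv> Legendre x (int p)"

lemma p2: "p > 2" using p_gt by simp

lemmas lm = leg_mult[OF p_prime p2]
lemmas lcases = leg_cases[OF p_prime p2]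
lemmas lzero = leg_zero_iff[OF p_prime p2]
lemmas lcong = leg_cong[OF p_prime p2]
lemmas lone = leg_one[OF p_prime p2]

lemma lpm: "0 < k \<Longrightarrow> k < int p \<Longrightarrow> L k = 1 \<or> L k = -1"
  using lcases[of k] lzero[of k] by (auto dest: zdvd_imp_le)

lemma lpm': "0 < k \<Longrightarrow> k < int p \<Longrightarrow> L k \<noteq> 1 \<Longrightarrow> L k = -1"
  using lpm by blast

lemma lminus: "L (int p - k) = L (-k)"
  by (rule lcong) (simp add: cong_iff_dvd_diff)

lemma lsq: "L x = 1 \<or> L x = -1 \<Longrightarrow> L (x*x) = 1"
  using lm[of x x] by auto

lemma famR:
  assumes n5: "n \<ge> 5" "odd n" "n < int p" and below: "\<forall>k. 0 < k \<and> k < n \<longrightarrow> L k = 1" and Ln: "L n = -1"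
  shows "goodAP p (n-3) 1"
proof -
  have a: "L (n-3) = 1" "L (n-2) = 1" "L (n-1) = 1" "L 2 = 1" using below n5 by auto
  obtain m where m: "n = 2*m + 1" using n5(2) by (metis oddE)
  have "L (m+1) = 1" using below m n5 by auto
  then have "L (n+1) = 1" using lm[of 2 "m+1"] a m by (simp add: algebra_simps)
  then show ?thesis unfolding goodAP_def using a Ln by (simp add: algebra_simps)
qed

lemma psi3_2: "\<not> 3 dvd m \<Longrightarrow> psi3 (2*m) = - psi3 m"
  unfolding psi3_def by presburger

lemma psi5_2: "\<not> 5 dvd m \<Longrightarrow> psi5 (2*m) = - psi5 m"
  unfolding psi5_def by presburger

lemma famDev3:
  assumes d: "d \<ge> 11" "odd d" "\<not> 3 dvd d" "d < int p" and dev: "L d = - psi3 d"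
  and below: "\<forall>j. 0 < j \<and> j < d \<and> \<not> 3 dvd j \<longrightarrow> L j = psi3 j" and k2: "L 2 = -1"
  shows "\<exists>a r. goodAP p a r"
proof -
  obtain k where k: "d = 2*k + 1" using d(2) by (metis oddE)
  have b: "\<And>j. 0 < j \<Longrightarrow> j < d \<Longrightarrow> \<not> 3 dvd j \<Longrightarrow> L j = psi3 j" using below by blast
  have r0: "0 < d-9" "d-9 < d" "0 < d-6" "d-6 < d" "0 < d-3" "d-3 < d" "0 < k+2" "k+2 < d"
    using d k by auto
  have dm: "(d-9) mod 3 = d mod 3" "(d-6) mod 3 = d mod 3" "(d-3) mod 3 = d mod 3"
    by presburger+
  have nd: "\<not> 3 dvd (d-9)" "\<not> 3 dvd (d-6)" "\<not> 3 dvd (d-3)"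
    using d(3) by presburger+
  have ps: "psi3 (d-9) = psi3 d" "psi3 (d-6) = psi3 d" "psi3 (d-3) = psi3 d"
    using dm unfolding psi3_def by simp_all
  have e: "L (d-9) = psi3 d" "L (d-6) = psi3 d" "L (d-3) = psi3 d"
    using b[of "d-9"] b[of "d-6"] b[of "d-3"] r0 nd ps by simp_all
  have ndm: "\<not> 3 dvd (k+2)" using d(3) k by presburger
  have em: "L (k+2) = psi3 (k+2)" using b[of "k+2"] r0 ndm by simp
  have pm: "psi3 (k+2) = - psi3 d"
  proof -
    have eq: "d + 3 = 2*(k+2)" using k by simp
    have "psi3 (d + 3) = - psi3 (k+2)" unfolding eq using psi3_2[OF ndm] .
    moreover have "psi3 (d + 3) = psi3 d" unfolding psi3_def by presburger
    ultimately show ?thesis by simp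
  qed
  have "psi3 d = 1 \<or> psi3 d = -1" unfolding psi3_def by simp
  moreover
  { assume P: "psi3 d = 1"
    have t3: "L d = -1" using dev P by simp
    have t4: "L (d+3) = 1" using lm[of 2 "k+2"] k2 k em pm P by (simp add: algebra_simps)
    have "goodAP p (d-9) 3" unfolding goodAP_def using e P t3 t4 d by (simp add: algebra_simps)
    then have ?thesis by blast
  }
  moreover
  { assume P: "psi3 d = -1"
    have t0: "L (2*d-18) = 1" using lm[of 2 "d-9"] k2 e P by (simp add: algebra_simps)
    have t1: "L (2*d-12) = 1" using lm[of 2 "d-6"] k2 e P by (simp add: algebra_simps)
    have t2: "L (2*d-6) = 1" using lm[of 2 "d-3"] k2 e P by (simp add: algebra_simps)
    have t3: "L (2*d) = -1" using lm[of 2 d] k2 dev P by simp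
    have t4: "L (2*d+6) = 1" using lm[of 2 "2*(k+2)"] lm[of 2 "k+2"] k2 k em pm P by (simp add: algebra_simps)
    have "goodAP p (2*d-18) 6" unfolding goodAP_def using t0 t1 t2 t3 t4 d by (simp add: algebra_simps)
    then have ?thesis by blast
  }
  ultimately show ?thesis by blast
qed

lemma famDev5:
  assumes d: "d \<ge> 17" "odd d" "\<not> 5 dvd d" "d < int p" and dev: "L d = - psi5 d"
  and below: "\<forall>j. 0 < j \<and> j < d \<and> \<not> 5 dvd j \<longrightarrow> L j = psi5 j" and k2: "L 2 = -1"
  shows "\<exists>a r. goodAP p a r"
proof -
  obtain k where k: "d = 2*k + 1" using d(2) by (metis oddE)
  have b: "\<And>j. 0 < j \<Longrightarrow> j < d \<Longrightarrow> \<not> 5 dvd j \<Longrightarrow> L j = psi5 j" using below by blast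
  have r0: "0 < d-15" "d-15 < d" "0 < d-10" "d-10 < d" "0 < d-5" "d-5 < d" "0 < k+3" "k+3 < d"
    using d k by auto
  have dm: "(d-15) mod 5 = d mod 5" "(d-10) mod 5 = d mod 5" "(d-5) mod 5 = d mod 5"
    by presburger+
  have nd: "\<not> 5 dvd (d-15)" "\<not> 5 dvd (d-10)" "\<not> 5 dvd (d-5)"
    using d(3) by presburger+
  have ps: "psi5 (d-15) = psi5 d" "psi5 (d-10) = psi5 d" "psi5 (d-5) = psi5 d"
    using dm unfolding psi5_def by simp_all
  have e: "L (d-15) = psi5 d" "L (d-10) = psi5 d" "L (d-5) = psi5 d"
    using b[of "d-15"] b[of "d-10"] b[of "d-5"] r0 nd ps by simp_all
  have ndm: "\<not> 5 dvd (k+3)" using d(3) k by presburger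
  have em: "L (k+3) = psi5 (k+3)" using b[of "k+3"] r0 ndm by simp
  have pm: "psi5 (k+3) = - psi5 d"
  proof -
    have eq: "d + 5 = 2*(k+3)" using k by simp
    have "psi5 (d + 5) = - psi5 (k+3)" unfolding eq using psi5_2[OF ndm] .
    moreover have "psi5 (d + 5) = psi5 d" unfolding psi5_def by presburger
    ultimately show ?thesis by simp
  qed
  have "psi5 d = 1 \<or> psi5 d = -1" unfolding psi5_def by simp
  moreover
  { assume P: "psi5 d = 1"
    have t3: "L d = -1" using dev P by simp
    have t4: "L (d+5) = 1" using lm[of 2 "k+3"] k2 k em pm P by (simp add: algebra_simps)
    have "goodAP p (d-15) 5" unfolding goodAP_def using e P t3 t4 d by (simp add: algebra_simps)
    then have ?thesis by blast
  }
  moreover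
  { assume P: "psi5 d = -1"
    have t0: "L (2*d-30) = 1" using lm[of 2 "d-15"] k2 e P by (simp add: algebra_simps)
    have t1: "L (2*d-20) = 1" using lm[of 2 "d-10"] k2 e P by (simp add: algebra_simps)
    have t2: "L (2*d-10) = 1" using lm[of 2 "d-5"] k2 e P by (simp add: algebra_simps)
    have t3: "L (2*d) = -1" using lm[of 2 d] k2 dev P by simp
    have t4: "L (2*d+10) = 1" using lm[of 2 "2*(k+3)"] lm[of 2 "k+3"] k2 k em pm P by (simp add: algebra_simps)
    have "goodAP p (2*d-30) 10" unfolding goodAP_def using t0 t1 t2 t3 t4 d by (simp add: algebra_simps)
    then have ?thesis by blast
  }
  ultimately show ?thesis by blast
qed

lemma least_dev:
  assumes "\<exists>k::nat. 0 < k \<and> k < p \<and> \<not> q dvd int k \<and> L (int k) \<noteq> f (int k)"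
  shows "\<exists>d. 0 < d \<and> d < int p \<and> \<not> q dvd d \<and> L d \<noteq> f d \<and> (\<forall>j. 0 < j \<and> j < d \<and> \<not> q dvd j \<longrightarrow> L j = f j)"
proof -
  define dn where "dn = (LEAST k::nat. 0 < k \<and> k < p \<and> \<not> q dvd int k \<and> L (int k) \<noteq> f (int k))"
  have dP: "0 < dn \<and> dn < p \<and> \<not> q dvd int dn \<and> L (int dn) \<noteq> f (int dn)"
    using LeastI_ex[OF assms] unfolding dn_def .
  have dmin: "\<And>k::nat. k < dn \<Longrightarrow> \<not>(0 < k \<and> k < p \<and> \<not> q dvd int k \<and> L (int k) \<noteq> f (int k))"
    using not_less_Least unfolding dn_def by blast
  have "\<forall>j. 0 < j \<and> j < int dn \<and> \<not> q dvd j \<longrightarrow> L j = f j"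
  proof (intro allI impI)
    fix j assume j: "0 < j \<and> j < int dn \<and> \<not> q dvd j"
    then have "nat j < dn" by auto
    then have "\<not>(0 < nat j \<and> nat j < p \<and> \<not> q dvd int (nat j) \<and> L (int (nat j)) \<noteq> f (int (nat j)))" by (rule dmin)
    then show "L j = f j" using j dP by auto
  qed
  then show ?thesis using dP by (intro exI[of _ "int dn"]) auto
qed

lemma none_conv:
  assumes "\<not> (\<exists>k::nat. 0 < k \<and> k < p \<and> \<not> q dvd int k \<and> L (int k) \<noteq> f (int k))"
  shows "\<And>j. 0 < j \<Longrightarrow> j < int p \<Longrightarrow> \<not> q dvd j \<Longrightarrow> L j = f j"
proof -
  fix j :: int assume j: "0 < j" "j < int p" "\<not> q dvd j"
  then have "0 < nat j \<and> nat j < p \<and> \<not> q dvd int (nat j)" by auto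
  then show "L j = f j" using assms j by force
qed

lemma lA: "L (int p - j) = L (-1) * L j"
  using lminus[of j] lm[of "-1" j] by simp

lemma p_not5: "\<not> 5 dvd int p"
proof
  assume "5 dvd int p"
  then have "5 dvd p" by presburger
  then show False using p_prime p_gt unfolding prime_nat_iff by force
qed

lemma p_not3: "\<not> 3 dvd int p"
proof
  assume "3 dvd int p"
  then have "3 dvd p" by presburger
  then show False using p_prime p_gt unfolding prime_nat_iff by force
qed

lemma p_odd: "odd p"
  using p_prime p_gt prime_odd_nat by auto

lemma q5leaf11:
  assumes k2: "L 2 = -1" and k3: "L 3 = -1" and k7: "L 7 = -1" and k11: "L 11 = -1"
  shows "\<exists>a r. goodAP p a r"
proof -
  have "L 5 = 1 \<or> L 5 = -1" using lpm[of 5] p_gt by simp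
  moreover
  { assume k5: "L 5 = 1"
      have lf0: "L 24 = 1" using lm[of 2 12] lm[of 2 6] lm[of 2 3] k2 k3 by simp
      have lf1: "L 22 = 1" using lm[of 2 11] k2 k11 by simp
      have lf2: "L 20 = 1" using lm[of 2 10] lm[of 2 5] k2 k5 by simp
      have lf3: "L 18 = -1" using lm[of 2 9] lm[of 3 3] k2 k3 by simp
      have lf4: "L 16 = 1" using lm[of 2 8] lm[of 2 4] lm[of 2 2] k2 by simp
      have "goodAP p 24 (-2)" unfolding goodAP_def using lf0 lf1 lf2 lf3 lf4 by simp
      then have ?thesis by blast
  }
  moreover
  { assume k5: "L 5 = -1"
      have lf0: "L 6 = 1" using lm[of 2 3] k2 k3 by simp
      have lf1: "L 10 = 1" using lm[of 2 5] k2 k5 by simp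
      have lf2: "L 14 = 1" using lm[of 2 7] k2 k7 by simp
      have lf3: "L 18 = -1" using lm[of 2 9] lm[of 3 3] k2 k3 by simp
      have lf4: "L 22 = 1" using lm[of 2 11] k2 k11 by simp
      have "goodAP p 6 4" unfolding goodAP_def using lf0 lf1 lf2 lf3 lf4 by simp
      then have ?thesis by blast
  }
  ultimately show ?thesis by blast
qed

lemma q5leaf13:
  assumes k2: "L 2 = -1" and k3: "L 3 = -1" and k7: "L 7 = -1" and k11: "L 11 = 1" and k13: "L 13 = 1"
  shows "\<exists>a r. goodAP p a r"
proof -
  have "L 5 = 1 \<or> L 5 = -1" using lpm[of 5] p_gt by simp
  moreover
  { assume k5: "L 5 = 1"
      have lf0: "L 13 = 1" using k13 by simp
      have lf1: "L 11 = 1" using k11 by simp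
      have lf2: "L 9 = 1" using lm[of 3 3] k3 by simp
      have lf3: "L 7 = -1" using k7 by simp
      have lf4: "L 5 = 1" using k5 by simp
      have "goodAP p 13 (-2)" unfolding goodAP_def using lf0 lf1 lf2 lf3 lf4 by simp
      then have ?thesis by blast
  }
  moreover
  { assume k5: "L 5 = -1"
      have lf0: "L 9 = 1" using lm[of 3 3] k3 by simp
      have lf1: "L 10 = 1" using lm[of 2 5] k2 k5 by simp
      have lf2: "L 11 = 1" using k11 by simp
      have lf3: "L 12 = -1" using lm[of 2 6] lm[of 2 3] k2 k3 by simp
      have lf4: "L 13 = 1" using k13 by simp
      have "goodAP p 9 1" unfolding goodAP_def using lf0 lf1 lf2 lf3 lf4 by simp
      then have ?thesis by blast
  }
  ultimately show ?thesis by blast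
qed

lemma q5branch:
  assumes k2: "L 2 = -1" and k3: "L 3 = -1" and k7: "L 7 = -1"
  shows "\<exists>a r. goodAP p a r"
proof (cases "\<exists>k::nat. 0 < k \<and> k < p \<and> \<not> 5 dvd int k \<and> L (int k) \<noteq> psi5 (int k)")
  case False
  note none = none_conv[OF False]
  have N: "L (-1) * L j = psi5 (int p - j)" if "0 < j" "j < int p" "\<not> 5 dvd (int p - j)" for j
    using none[of "int p - j"] lA[of j] that by simp
  have k4: "L 4 = 1" using lm[of 2 2] k2 by simp
  have pg: "int p > 5" using p_gt by simp
  have "int p mod 5 = 1 \<or> int p mod 5 = 2 \<or> int p mod 5 = 3 \<or> int p mod 5 = 4" using p_not5 by presburger
  then have False
  proof (elim disjE)
    assume h: "int p mod 5 = 1"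
    have "(int p - 2) mod 5 = 4" "(int p - 3) mod 5 = 3" using h by presburger+
    then show False using N[of 2] N[of 3] k2 k3 pg by (simp add: psi5_def dvd_eq_mod_eq_0)
  next
    assume h: "int p mod 5 = 2"
    have "(int p - 1) mod 5 = 1" "(int p - 3) mod 5 = 4" using h by presburger+
    then show False using N[of 1] N[of 3] k3 lone pg by (simp add: psi5_def dvd_eq_mod_eq_0)
  next
    assume h: "int p mod 5 = 3"
    have "(int p - 1) mod 5 = 2" "(int p - 4) mod 5 = 4" using h by presburger+
    then show False using N[of 1] N[of 4] k4 lone pg by (simp add: psi5_def dvd_eq_mod_eq_0)
  next
    assume h: "int p mod 5 = 4"
    have "(int p - 1) mod 5 = 3" "(int p - 2) mod 5 = 2" using h by presburger+
    then show False using N[of 1] N[of 2] k2 lone pg by (simp add: psi5_def dvd_eq_mod_eq_0)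
  qed
  then show ?thesis ..
next
  case True
  obtain d where d: "0 < d" "d < int p" "\<not> 5 dvd d" "L d \<noteq> psi5 d"
    and below: "\<forall>j. 0 < j \<and> j < d \<and> \<not> 5 dvd j \<longrightarrow> L j = psi5 j"
    using least_dev[OF True] by blast
  have dev: "L d = - psi5 d" using lpm[OF d(1,2)] d(4) unfolding psi5_def by auto
  have dodd: "odd d"
  proof
    assume "even d"
    then obtain m where m: "d = 2*m" by (elim evenE)
    have mm: "0 < m" "m < d" "\<not> 5 dvd m" using m d by presburger+
    then have "L m = psi5 m" using below by blast
    then have "L d = - psi5 m" using lm[of 2 m] k2 m by simp
    moreover have "psi5 d = - psi5 m" using psi5_2[OF mm(3)] m by simp
    ultimately show False using d(4) by simp
  qed
  have "d \<noteq> 1" using d(4) lone by (auto simp: psi5_def)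
  moreover have "d \<noteq> 3" using d(4) k3 by (auto simp: psi5_def)
  moreover have "d \<noteq> 7" using d(4) k7 by (auto simp: psi5_def)
  moreover have "d \<noteq> 9" using d(4) lm[of 3 3] k3 by (auto simp: psi5_def)
  ultimately have "d = 11 \<or> d = 13 \<or> d \<ge> 17" using dodd d(1,3) by presburger
  moreover
  { assume "d \<ge> 17"
    then have ?thesis using famDev5[OF _ dodd d(3) d(2) dev below k2] by blast }
  moreover
  { assume d11: "d = 11"
    have "L 11 = -1" using dev d11 by (simp add: psi5_def)
    then have ?thesis using q5leaf11[OF k2 k3 k7] by blast }
  moreover
  { assume d13: "d = 13"
    have "L 13 = 1" using dev d13 by (simp add: psi5_def)
    moreover have "L 11 = 1" using below d13 by (simp add: psi5_def)
    ultimately have ?thesis using q5leaf13[OF k2 k3 k7] by blast }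
  ultimately show ?thesis by blast
qed

lemma partC2:
  assumes k2: "L 2 = -1" and k5: "L 5 = 1"
  shows "\<exists>a r. goodAP p a r"
proof -
  have "L 3 = 1 \<or> L 3 = -1" using lpm[of 3] p_gt by simp
  moreover
  { assume k3: "L 3 = 1"
    have lf0: "L 5 = 1" using k5 by simp
    have lf1: "L 4 = 1" using lm[of 2 2] k2 by simp
    have lf2: "L 3 = 1" using k3 by simp
    have lf3: "L 2 = -1" using k2 by simp
    have lf4: "L 1 = 1" using lone by simp
    have "goodAP p 5 (-1)" unfolding goodAP_def using lf0 lf1 lf2 lf3 lf4 by simp
    then have ?thesis by blast
  }
  moreover
  { assume k3: "L 3 = -1"
    have "L 7 \<noteq> 0"
    proof
      assume "L 7 = 0"
      then have "[9 = 2] (mod int p)" using lzero[of 7] by (simp add: cong_iff_dvd_diff)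
      then have "L 9 = L 2" by (rule lcong)
      moreover have "L 9 = 1" using lm[of 3 3] k3 by simp
      ultimately show False using k2 by simp
    qed
    then have "L 7 = 1 \<or> L 7 = -1" using lcases[of 7] by auto
    moreover
    { assume k7: "L 7 = 1"
      have lf0: "L 5 = 1" using k5 by simp
      have lf1: "L 6 = 1" using lm[of 2 3] k2 k3 by simp
      have lf2: "L 7 = 1" using k7 by simp
      have lf3: "L 8 = -1" using lm[of 2 4] lm[of 2 2] k2 by simp
      have lf4: "L 9 = 1" using lm[of 3 3] k3 by simp
      have "goodAP p 5 1" unfolding goodAP_def using lf0 lf1 lf2 lf3 lf4 by simp
      then have ?thesis by blast
    }
    moreover
    { assume k7: "L 7 = -1"
      have ?thesis using q5branch[OF k2 k3 k7] .
    }
    ultimately have ?thesis by blast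
  }
  ultimately show ?thesis by blast
qed

lemma partC3:
  assumes k2: "L 2 = -1" and k5: "L 5 = -1" and k7: "L 7 = -1"
  shows "\<exists>a r. goodAP p a r"
proof -
  have "L 3 = 1 \<or> L 3 = -1" using lpm[of 3] p_gt by simp
  moreover
  { assume k3: "L 3 = 1"
    have "L 13 = 1 \<or> L 13 = -1 \<or> L 13 = 0" using lcases[of 13] by auto
    moreover
    { assume k13: "L 13 = 1"
      have lf0: "L 12 = 1" using lm[of 2 6] lm[of 2 3] k2 k3 by simp
      have lf1: "L 13 = 1" using k13 by simp
      have lf2: "L 14 = 1" using lm[of 2 7] k2 k7 by simp
      have lf3: "L 15 = -1" using lm[of 3 5] k3 k5 by simp
      have lf4: "L 16 = 1" using lm[of 2 8] lm[of 2 4] lm[of 2 2] k2 by simp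
      have "goodAP p 12 1" unfolding goodAP_def using lf0 lf1 lf2 lf3 lf4 by simp
      then have ?thesis by blast
    }
    moreover
    { assume k13: "L 13 = 0"
      then have "[-1 = 12] (mod int p)" using lzero[of 13] by (simp add: cong_iff_dvd_diff)
      then have "L (-1) = L 12" by (rule lcong)
      moreover have "L 12 = 1" using lm[of 2 6] lm[of 2 3] k2 k3 by simp
      ultimately have km1: "L (-1) = 1" by simp
      have lf0: "L (-1) = 1" using lm[of "-1" 1] km1 lone by simp
      have lf2: "L 1 = 1" using lone by simp
      have lf3: "L 2 = -1" using k2 by simp
      have lf4: "L 3 = 1" using k3 by simp
      have "goodAP p (-1) 1" unfolding goodAP_def using lf0 lf2 lf3 lf4 by simp
      then have ?thesis by blast
    }
    moreover
    { assume k13: "L 13 = -1"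
      have "L 11 \<noteq> 0"
      proof
        assume "L 11 = 0"
        then have "[16 = 5] (mod int p)" using lzero[of 11] by (simp add: cong_iff_dvd_diff)
        then have "L 16 = L 5" by (rule lcong)
        moreover have "L 16 = 1" using lm[of 4 4] lm[of 2 2] k2 by simp
        ultimately show False using k5 by simp
      qed
      then have "L 11 = 1 \<or> L 11 = -1" using lcases[of 11] by auto
      moreover
      { assume k11: "L 11 = 1"
        have lf0: "L 10 = 1" using lm[of 2 5] k2 k5 by simp
        have lf1: "L 11 = 1" using k11 by simp
        have lf2: "L 12 = 1" using lm[of 2 6] lm[of 2 3] k2 k3 by simp
        have lf3: "L 13 = -1" using k13 by simp
        have lf4: "L 14 = 1" using lm[of 2 7] k2 k7 by simp
        have "goodAP p 10 1" unfolding goodAP_def using lf0 lf1 lf2 lf3 lf4 by simp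
        then have ?thesis by blast
      }
      moreover
      { assume k11: "L 11 = -1"
        have lf0: "L 30 = 1" using lm[of 2 15] lm[of 3 5] k2 k3 k5 by simp
        have lf1: "L 26 = 1" using lm[of 2 13] k2 k13 by simp
        have lf2: "L 22 = 1" using lm[of 2 11] k2 k11 by simp
        have lf3: "L 18 = -1" using lm[of 2 9] lm[of 3 3] k2 k3 by simp
        have lf4: "L 14 = 1" using lm[of 2 7] k2 k7 by simp
        have "goodAP p 30 (-4)" unfolding goodAP_def using lf0 lf1 lf2 lf3 lf4 by simp
        then have ?thesis by blast
      }
      ultimately have ?thesis by blast
    }
    ultimately have ?thesis by blast
  }
  moreover
  { assume k3: "L 3 = -1"
    have ?thesis using q5branch[OF k2 k3 k7] .
  }
  ultimately show ?thesis by blast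
qed

lemma partC:
  assumes k2: "L 2 = -1"
  shows "\<exists>a r. goodAP p a r"
proof (cases "\<exists>k::nat. 0 < k \<and> k < p \<and> \<not> 3 dvd int k \<and> L (int k) \<noteq> psi3 (int k)")
  case False
  note none = none_conv[OF False]
  have N: "L (-1) * L j = psi3 (int p - j)" if "0 < j" "j < int p" "\<not> 3 dvd (int p - j)" for j
    using none[of "int p - j"] lA[of j] that by simp
  have pg: "int p > 5" using p_gt by simp
  have km1: "L (-1) = 1"
  proof -
    have "int p mod 3 = 1 \<or> int p mod 3 = 2" using p_not3 by presburger
    then show ?thesis
    proof
      assume h: "int p mod 3 = 1"
      have "(int p - 2) mod 3 = 2" using h by presburger
      then show ?thesis using N[of 2] k2 pg by (simp add: psi3_def dvd_eq_mod_eq_0)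
    next
      assume h: "int p mod 3 = 2"
      have "(int p - 1) mod 3 = 1" using h by presburger
      then show ?thesis using N[of 1] lone pg by (simp add: psi3_def dvd_eq_mod_eq_0)
    qed
  qed
  have k3: "L 3 = psi3 (int p)"
  proof -
    have "\<not> 3 dvd (int p - 3)" "psi3 (int p - 3) = psi3 (int p)" using p_not3 unfolding psi3_def by presburger+
    then show ?thesis using N[of 3] km1 pg by simp
  qed
  have "int p mod 3 = 1 \<or> int p mod 3 = 2" using p_not3 by presburger
  moreover
  { assume h: "int p mod 3 = 1"
    then have k3: "L 3 = 1" using k3 by (simp add: psi3_def)
    have "goodAP p (-1) 1" unfolding goodAP_def using km1 k2 k3 lone by simp
    then have ?thesis by blast }
  moreover
  { assume h: "int p mod 3 = 2"
    then have k3: "L 3 = -1" using k3 by (simp add: psi3_def)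
    have k5: "L 5 = -1" using none[of 5] pg by (simp add: psi3_def)
    have "p = 11 \<or> p \<ge> 17" using h p_odd p_gt by presburger
    moreover
    { assume "p = 11"
      then have "[5 = -6] (mod int p)" by (simp add: cong_iff_dvd_diff)
      then have "L 5 = L (-6)" by (rule lcong)
      moreover have "L (-6) = 1" using lm[of "-1" 6] lm[of 2 3] km1 k2 k3 by simp
      ultimately have ?thesis using k5 by simp }
    moreover
    { assume "p \<ge> 17"
      then have k13: "L 13 = 1" using none[of 13] by (simp add: psi3_def)
      have f0: "L (-13) = 1" using lm[of "-1" 13] km1 k13 by simp
      have f1: "L (-6) = 1" using lm[of "-1" 6] lm[of 2 3] km1 k2 k3 by simp
      have f3: "L 8 = -1" using lm[of 2 4] lm[of 2 2] k2 by simp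
      have f4: "L 15 = 1" using lm[of 3 5] k3 k5 by simp
      have "goodAP p (-13) 7" unfolding goodAP_def using f0 f1 f3 f4 lone by simp
      then have ?thesis by blast }
    ultimately have ?thesis by blast }
  ultimately show ?thesis by blast
next
  case True
  obtain d where d: "0 < d" "d < int p" "\<not> 3 dvd d" "L d \<noteq> psi3 d"
    and below: "\<forall>j. 0 < j \<and> j < d \<and> \<not> 3 dvd j \<longrightarrow> L j = psi3 j"
    using least_dev[OF True] by blast
  have dev: "L d = - psi3 d" using lpm[OF d(1,2)] d(4) unfolding psi3_def by auto
  have dodd: "odd d"
  proof
    assume "even d"
    then obtain m where m: "d = 2*m" by (elim evenE)
    have mm: "0 < m" "m < d" "\<not> 3 dvd m" using m d by presburger+
    then have "L m = psi3 m" using below by blast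
    then have "L d = - psi3 m" using lm[of 2 m] k2 m by simp
    moreover have "psi3 d = - psi3 m" using psi3_2[OF mm(3)] m by simp
    ultimately show False using d(4) by simp
  qed
  have "d \<noteq> 1" using d(4) lone by (auto simp: psi3_def)
  then have "d = 5 \<or> d = 7 \<or> d \<ge> 11" using dodd d(1,3) by presburger
  moreover
  { assume "d \<ge> 11"
    then have ?thesis using famDev3[OF _ dodd d(3) d(2) dev below k2] by blast }
  moreover
  { assume d5: "d = 5"
    have "L 5 = 1" using dev d5 by (simp add: psi3_def)
    then have ?thesis using partC2[OF k2] by blast }
  moreover
  { assume d7: "d = 7"
    have "L 7 = -1" using dev d7 by (simp add: psi3_def)
    moreover have "L 5 = -1" using below d7 by (simp add: psi3_def)
    ultimately have ?thesis using partC3[OF k2] by blast }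
  ultimately show ?thesis by blast
qed

lemma comb: "\<exists>a r. goodAP p a r"
proof (cases "\<exists>k::nat. 0 < k \<and> k < p \<and> \<not> 0 dvd int k \<and> L (int k) \<noteq> (\<lambda>x. 1) (int k)")
  case False
  note none = none_conv[OF False]
  have "L (int p - 3) = 1" "L (int p - 2) = 1" "L (int p - 1) = 1" using none p_gt by auto
  then have "L (-3) = 1" "L (-2) = 1" "L (-1) = 1" using lminus by simp_all
  then have "goodAP p (-3) 1" unfolding goodAP_def using lone by simp
  then show ?thesis by blast
next
  case True
  obtain n where n: "0 < n" "n < int p" "L n \<noteq> 1"
    and below: "\<forall>j. 0 < j \<and> j < n \<longrightarrow> L j = 1"
    using least_dev[OF True] by auto
  have Ln: "L n = -1" using lpm[OF n(1,2)] n(3) by auto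
  have k2: "n > 2 \<Longrightarrow> L 2 = 1" using below by auto
  have "n \<noteq> 1" using n(3) lone by auto
  then have "n = 2 \<or> n = 3 \<or> n \<ge> 4" using n(1) by linarith
  moreover
  { assume "n = 2" then have ?thesis using partC Ln by simp }
  moreover
  { assume n3: "n = 3"
    have "L 4 = 1" using lm[of 2 2] k2 n3 by simp
    then have "goodAP p 0 1" unfolding goodAP_def using lone k2 n3 Ln by simp
    then have ?thesis by blast }
  moreover
  { assume n4: "n \<ge> 4"
    have "odd n"
    proof
      assume "even n"
      then obtain m where m: "n = 2*m" by (elim evenE)
      have "0 < m" "m < n" using m n4 by auto
      then have "L m = 1" using below by blast
      then have "L n = 1" using lm[of 2 m] k2 m n4 by simp
      then show False using Ln by simp
    qed
    then have "n \<ge> 5" using n4 by presburger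
    then have ?thesis using famR[OF _ \<open>odd n\<close> n(2) below Ln] by blast }
  ultimately show ?thesis by blast
qed

end

theorem lemma4p4:
  fixes D :: int and p :: nat
  assumes "squarefree D" and "prime p" and "p > 5" and "\<not> int p dvd D"
  shows "CD_has_Qp_point D p"
proof -
  have p2: "p > 2" using assms by simp
  have "Legendre D (int p) = 1 \<or> Legendre D (int p) = -1"
    using leg_cases[OF assms(2) p2, of D] leg_zero_iff[OF assms(2) p2, of D] assms(4) by auto
  then show ?thesis
  proof
    assume h: "Legendre D (int p) = 1"
    show ?thesis using ap_point[OF assms(2) p2 assms(4), where a=1 and r=0] h leg_one[OF assms(2) p2] by simp
  next
    assume h: "Legendre D (int p) = -1"
    obtain a r where "goodAP p a r" using comb[OF assms(2) assms(3)] by blast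
    then show ?thesis using ap_point[OF assms(2) p2 assms(4), where a=a and r=r] h unfolding goodAP_def by auto
  qed
qed

end
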